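(* Let $\alpha,\beta,\gamma\ge0$ with $\alpha(\beta+\gamma)>0$. Then for every $\theta\in(0,2\pi)$ both roots $\lambda\in\mathbb C$ of $$\lambda^2+\gamma\lambda+\beta\lambda(1-e^{i\theta})+\alpha(2-e^{i\theta}-e^{-i\theta})=0$$ have strictly negative real part.
   Context: This is the characteristic equation of the linearised car-following system $\ddot s_n=-\gamma\dot s_n+\beta(\dot s_{n+1}-\dot s_n)+\alpha(s_{n+1}-2s_n+s_{n-1})$ on a ring (optimal velocity function constant), obtained from the ansatz $s_n=\xi e^{\lambda t}e^{in\theta}$. *)

theory Defs
  imports Complex_Main
begin

end

theory Submission
  imports Defs
begin

theorem mainTheorem7:
  fixes a b c t :: real and z :: complex
  assumes "a \<ge> 0" and "b \<ge> 0" and "c \<ge> 0"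
    and "a * (b + c) > 0"
    and "0 < t" and "t < 2 * pi"
    and "z\<^sup>2 + of_real c * z + of_real b * z * (1 - exp (\<i> * of_real t))
          + of_real a * (2 - exp (\<i> * of_real t) - exp (- (\<i> * of_real t))) = 0"
  shows "Re z < 0"
proof (rule ccontr)
  assume nx: "\<not> Re z < 0"
  define x where "x = Re z"
  define y where "y = Im z"
  define C where "C = cos t"
  define S where "S = sin t"
  have zxy: "z = Complex x y" by (simp add: x_def y_def)
  have e1: "exp (\<i> * of_real t) = Complex C S"
    by (simp add: C_def S_def exp_eq_polar cis.ctr)
  have e2: "exp (- (\<i> * of_real t)) = Complex C (-S)"
    by (simp add: C_def S_def exp_eq_polar cis.ctr)
  have C1: "C < 1"
  proof -
    have "C \<le> 1" by (simp add: C_def)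
    moreover have "C \<noteq> 1"
    proof
      assume "C = 1"
      then have "cos t = 1" by (simp add: C_def)
      then obtain n :: int where tn: "t = real_of_int n * 2 * pi" using cos_one_2pi_int by blast
      have "0 < real_of_int n * (2*pi)" using assms(5) tn by simp
      then have "0 < real_of_int n" using pi_gt_zero by (simp add: zero_less_mult_iff)
      moreover have "real_of_int n * (2*pi) < 1 * (2*pi)" using assms(6) tn by simp
      then have "real_of_int n < 1" using pi_gt_zero by (simp only: mult_less_cancel_right)
      ultimately show False by simp
    qed
    ultimately show ?thesis by simp
  qed
  have a0: "a > 0" using assms(1-4)
    by (metis add_nonneg_nonneg mult_zero_left order_le_less)
  define p where "p = c + b * (1 - C)"
  define q where "q = - b * S"
  define r where "r = 2 * a * (1 - C)"
  have p0: "p > 0" using assms(1-4) C1 a0 unfolding p_def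
    by (smt (verit, best) mult_pos_pos mult_nonneg_nonneg zero_less_mult_iff)
  have r0: "r > 0" using a0 C1 unfolding r_def by simp
  have eqs: "Complex (x*x - y*y + p*x - q*y + r) (2*x*y + p*y + q*x) = 0"
    using assms(7) unfolding zxy e1 e2 p_def q_def r_def
    by (simp add: power2_eq_square complex_eq_iff algebra_simps)
  then have re: "x*x - y*y + p*x - q*y + r = 0" and im: "2*x*y + p*y + q*x = 0"
    by (simp_all add: complex_eq_iff)
  have x0: "x \<ge> 0" using nx x_def by simp
  have d: "(2*x+p) * y = - q * x" using im by (simp add: algebra_simps)
  have d2: "(2*x+p) * (y + q) = q * (x + p)" using im by (simp add: algebra_simps)
  have "(2*x+p)^2 * (x*x + p*x + r) = ((2*x+p)*y) * ((2*x+p)*(y+q))"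
    using re by (simp add: power2_eq_square algebra_simps)
  also have "\<dots> = - (q*q) * (x * (x+p))" using d d2 by simp
  also have "\<dots> \<le> 0" using x0 p0 by (simp add: mult_nonneg_nonneg)
  finally have le: "(2*x+p)^2 * (x*x + p*x + r) \<le> 0" .
  have "(2*x+p)^2 * (x*x + p*x + r) > 0"
  proof (intro mult_pos_pos)
    show "0 < (2*x+p)^2" using x0 p0 by simp
    have "0 \<le> x*x + p*x" using x0 p0 by simp
    then show "0 < x*x + p*x + r" using r0 by linarith
  qed
  with le show False by simp
qed

end
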